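(* Assume (A1) and fix all parameters except $\omega$ (so $E=\mu\sigma(1-2b^2\beta)$ is fixed). Let $\Omega=\{\omega\in[0,1]:\ \text{conditions (C1)--(C4) hold}\}$. Then $\Omega$ is a (possibly empty) subinterval of $[0,1]$. Moreover each of the following occurs for suitable values of the fixed parameters satisfying (A1): $\Omega=\emptyset$ (unconditionally unstable); $\Omega=[0,1]$ (unconditionally stable); $\Omega=[0,\bar\omega)$ with $\bar\omega\in(0,1)$ (destabilizing); $\Omega=(\bar\omega,1]$ with $\bar\omega\in(0,1)$ (stabilizing); $\Omega=(\omega_a,\omega_b)$ with $0<\omega_a<\omega_b<1$ (mixed).
   Context: Parameters: $c\in(0,1)$, $\gamma>0$, $\omega\in[0,1]$, $h>0$, $d>0$, $\sigma>0$, $\mu>0$, $b>0$, $\beta>0$, and $E=\mu\sigma(1-2b^2\beta)$. Assumption (A1): $1-c-hd>0$. Conditions (C1)--(C4) are: (C1) $E>0$; (C2) $(2-E)(1+c+2\gamma)-\omega^2dhE>0$; (C3) $1-c+cE+\omega^2dhE+\gamma c-E\gamma-E\gamma c+E^2\gamma-E^2\gamma^2+E\gamma^2-\gamma>0$; (C4) $2\gamma+c-cE-\gamma E-\omega^2dhE<3$. These are the conditions guaranteeing that all eigenvalues of the Jacobian matrix $\begin{pmatrix}c+\gamma&\omega h&-\gamma\\ \omega dE&1-E&0\\1&0&0\end{pmatrix}$ (the Jacobian, at the unbiased steady state $S^*$, of the model map) lie in the open unit disk. *)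

theory Defs
  imports "HOL-Analysis.Analysis"
begin

definition E_of :: "real \<Rightarrow> real \<Rightarrow> real \<Rightarrow> real \<Rightarrow> real" where
  "E_of \<mu> \<sigma> b \<beta> = \<mu> * \<sigma> * (1 - 2 * b^2 * \<beta>)"

definition admissible ::
  "real \<Rightarrow> real \<Rightarrow> real \<Rightarrow> real \<Rightarrow> real \<Rightarrow> real \<Rightarrow> real \<Rightarrow> real \<Rightarrow> bool" where
  "admissible c \<gamma> h d \<sigma> \<mu> b \<beta> \<longleftrightarrow>
     0 < c \<and> c < 1 \<and> 0 < \<gamma> \<and> 0 < h \<and> 0 < d \<and> 0 < \<sigma> \<and> 0 < \<mu> \<and> 0 < b \<and> 0 < \<beta>
     \<and> 1 - c - h * d > 0"

definition C1 :: "real \<Rightarrow> bool" where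
  "C1 E \<longleftrightarrow> E > 0"

definition C2 :: "real \<Rightarrow> real \<Rightarrow> real \<Rightarrow> real \<Rightarrow> real \<Rightarrow> real \<Rightarrow> bool" where
  "C2 c \<gamma> \<omega> h d E \<longleftrightarrow> (2 - E) * (1 + c + 2 * \<gamma>) - \<omega>^2 * d * h * E > 0"

definition C3 :: "real \<Rightarrow> real \<Rightarrow> real \<Rightarrow> real \<Rightarrow> real \<Rightarrow> real \<Rightarrow> bool" where
  "C3 c \<gamma> \<omega> h d E \<longleftrightarrow>
     1 - c + c * E + \<omega>^2 * d * h * E + \<gamma> * c - E * \<gamma> - E * \<gamma> * c + E^2 * \<gamma>
       - E^2 * \<gamma>^2 + E * \<gamma>^2 - \<gamma> > 0"

definition C4 :: "real \<Rightarrow> real \<Rightarrow> real \<Rightarrow> real \<Rightarrow> real \<Rightarrow> real \<Rightarrow> bool" where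
  "C4 c \<gamma> \<omega> h d E \<longleftrightarrow> 2 * \<gamma> + c - c * E - \<gamma> * E - \<omega>^2 * d * h * E < 3"

definition Omega ::
  "real \<Rightarrow> real \<Rightarrow> real \<Rightarrow> real \<Rightarrow> real \<Rightarrow> real \<Rightarrow> real \<Rightarrow> real \<Rightarrow> real set" where
  "Omega c \<gamma> h d \<sigma> \<mu> b \<beta> =
     {\<omega> \<in> {0..1}. let E = E_of \<mu> \<sigma> b \<beta> in
        C1 E \<and> C2 c \<gamma> \<omega> h d E \<and> C3 c \<gamma> \<omega> h d E \<and> C4 c \<gamma> \<omega> h d E}"

end

theory Submission
  imports Defs
begin

lemma Omega_eq:
  assumes "E_of \<mu> \<sigma> b \<beta> = E" "E > 0" "d * h > 0"
  shows "Omega c \<gamma> h d \<sigma> \<mu> b \<beta> =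
    {\<omega> \<in> {0..1}. \<omega>^2 < ((2 - E) * (1 + c + 2 * \<gamma>)) / (d*h*E)
       \<and> - (1 - c + c * E + \<gamma> * c - E * \<gamma> - E * \<gamma> * c + E^2 * \<gamma>
       - E^2 * \<gamma>^2 + E * \<gamma>^2 - \<gamma>) / (d*h*E) < \<omega>^2
       \<and> (2 * \<gamma> + c - c * E - \<gamma> * E - 3) / (d*h*E) < \<omega>^2}"
proof -
  have K: "d*h*E > 0" using assms by simp
  have e2: "C2 c \<gamma> w h d E = (w^2 < ((2 - E) * (1 + c + 2 * \<gamma>)) / (d*h*E))" for w
    unfolding C2_def pos_less_divide_eq[OF K] by (simp add: mult.assoc)
  have e3: "C3 c \<gamma> w h d E = (- (1 - c + c * E + \<gamma> * c - E * \<gamma> - E * \<gamma> * c + E^2 * \<gamma>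
       - E^2 * \<gamma>^2 + E * \<gamma>^2 - \<gamma>) / (d*h*E) < w^2)" for w
    unfolding C3_def pos_divide_less_eq[OF K] by (simp add: mult.assoc) linarith
  have e4: "C4 c \<gamma> w h d E = ((2 * \<gamma> + c - c * E - \<gamma> * E - 3) / (d*h*E) < w^2)" for w
    unfolding C4_def pos_divide_less_eq[OF K] by (simp add: mult.assoc) linarith
  show ?thesis
    unfolding Omega_def Let_def assms(1) C1_def e2 e3 e4
    using assms(2) by auto
qed

lemma sq_lt_iff: "0 \<le> w \<Longrightarrow> 0 \<le> U \<Longrightarrow> (w^2 < U) = (w < sqrt U)"
  by (metis abs_of_nonneg real_sqrt_abs real_sqrt_less_iff)

lemma lt_sq_iff: "0 \<le> w \<Longrightarrow> 0 \<le> L \<Longrightarrow> (L < w^2) = (sqrt L < w)"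
  by (metis abs_of_nonneg real_sqrt_abs real_sqrt_less_iff)

lemma Eval: "E_of (2*E) 1 (1/2) 1 = E"
  unfolding E_of_def by (simp add: power2_eq_square)

lemma part1: "admissible c \<gamma> h d \<sigma> \<mu> b \<beta> \<Longrightarrow> is_interval (Omega c \<gamma> h d \<sigma> \<mu> b \<beta>)"
proof -
  assume adm: "admissible c \<gamma> h d \<sigma> \<mu> b \<beta>"
  show ?thesis
  proof (cases "E_of \<mu> \<sigma> b \<beta> > 0")
    case False
    then have "Omega c \<gamma> h d \<sigma> \<mu> b \<beta> = {}" unfolding Omega_def C1_def Let_def by auto
    then show ?thesis by simp
  next
    case True
    define E where "E = E_of \<mu> \<sigma> b \<beta>"
    have dh: "d*h > 0" using adm unfolding admissible_def by simp
    show ?thesis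
      unfolding Omega_eq[OF E_def[symmetric] True[folded E_def] dh] is_interval_1
    proof (intro ballI allI impI)
      fix a x y assume a: "a \<in> {\<omega> \<in> {0..1}. \<omega>^2 < ((2 - E) * (1 + c + 2 * \<gamma>)) / (d*h*E)
       \<and> - (1 - c + c * E + \<gamma> * c - E * \<gamma> - E * \<gamma> * c + E^2 * \<gamma>
       - E^2 * \<gamma>^2 + E * \<gamma>^2 - \<gamma>) / (d*h*E) < \<omega>^2
       \<and> (2 * \<gamma> + c - c * E - \<gamma> * E - 3) / (d*h*E) < \<omega>^2}"
       and y: "y \<in> {\<omega> \<in> {0..1}. \<omega>^2 < ((2 - E) * (1 + c + 2 * \<gamma>)) / (d*h*E)
       \<and> - (1 - c + c * E + \<gamma> * c - E * \<gamma> - E * \<gamma> * c + E^2 * \<gamma>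
       - E^2 * \<gamma>^2 + E * \<gamma>^2 - \<gamma>) / (d*h*E) < \<omega>^2
       \<and> (2 * \<gamma> + c - c * E - \<gamma> * E - 3) / (d*h*E) < \<omega>^2}"
       and x: "a \<le> x \<and> x \<le> y"
      have ax: "a^2 \<le> x^2" using a x by (intro power_mono) auto
      have xy: "x^2 \<le> y^2" using a x by (intro power_mono) auto
      have x01: "x \<in> {0..1}" using a y x by auto
      show "x \<in> {\<omega> \<in> {0..1}. \<omega>^2 < ((2 - E) * (1 + c + 2 * \<gamma>)) / (d*h*E)
       \<and> - (1 - c + c * E + \<gamma> * c - E * \<gamma> - E * \<gamma> * c + E^2 * \<gamma>
       - E^2 * \<gamma>^2 + E * \<gamma>^2 - \<gamma>) / (d*h*E) < \<omega>^2
       \<and> (2 * \<gamma> + c - c * E - \<gamma> * E - 3) / (d*h*E) < \<omega>^2}"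
        using x01 ax xy a y
        unfolding mem_Collect_eq
        by (meson less_le_trans le_less_trans)
    qed
  qed
qed

lemma case1: "Omega (1/2) 1 (1/2) (1/2) 1 (2*3) (1/2) 1 = {}"
  unfolding Omega_def Let_def Eval C2_def
  apply (auto simp: not_less)
  subgoal for x using zero_le_power2[of x] by linarith
  done

lemma case2: "Omega (1/2) (1/2) (1/4) 1 1 (2*(1/2)) (1/2) 1 = {0..1}"
proof -
  have "Omega (1/2) (1/2) (1/4) 1 1 (2*(1/2)) (1/2) 1 =
        {\<omega> \<in> {0..1}. \<omega>^2 < 30 \<and> -5/2 < \<omega>^2 \<and> -16 < \<omega>^2}"
    by (subst Omega_eq[OF Eval]) (simp_all add: power2_eq_square)
  also have "\<dots> = {0..1}"
  proof (intro set_eqI iffI)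
    fix w assume "w \<in> {0..1::real}"
    then have "w^2 \<le> 1" "0 \<le> w^2" by (auto simp: power_le_one)
    then show "w \<in> {\<omega> \<in> {0..1}. \<omega>^2 < 30 \<and> -5/2 < \<omega>^2 \<and> -16 < \<omega>^2}"
    proof -
      have "0 \<le> w^2" by simp
      then have "w^2 < 30 \<and> -5/2 < w^2 \<and> -16 < w^2" using \<open>w^2 \<le> 1\<close> by linarith
      then show ?thesis using \<open>w \<in> {0..1}\<close> by blast
    qed
  qed auto
  finally show ?thesis .
qed

lemma set3: assumes "l1 < 0" "l2 < 0" "0 < U" "U \<le> 1"
  shows "{\<omega>::real \<in> {0..1}. \<omega>^2 < U \<and> l1 < \<omega>^2 \<and> l2 < \<omega>^2} = {0..<sqrt U}"
proof (intro set_eqI iffI)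
  fix w :: real
  have sU: "sqrt U \<le> 1" using assms by simp
  {
    assume w: "w \<in> {\<omega>::real \<in> {0..1}. \<omega>^2 < U \<and> l1 < \<omega>^2 \<and> l2 < \<omega>^2}"
    then show "w \<in> {0..<sqrt U}" using sq_lt_iff[of w U] assms by auto
  }
  {
    assume w: "w \<in> {0..<sqrt U}"
    have "0 \<le> w^2" by simp
    moreover have "w^2 < U" using w sq_lt_iff[of w U] assms by auto
    ultimately show "w \<in> {\<omega>::real \<in> {0..1}. \<omega>^2 < U \<and> l1 < \<omega>^2 \<and> l2 < \<omega>^2}"
      using w sU assms unfolding mem_Collect_eq atLeastAtMost_iff atLeastLessThan_iff
      by (intro conjI; linarith)
  }
qed

lemma set4: assumes "0 \<le> L" "l2 \<le> L" "L < 1" "1 < U"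
  shows "{\<omega>::real \<in> {0..1}. \<omega>^2 < U \<and> L < \<omega>^2 \<and> l2 < \<omega>^2} = {sqrt L<..1}"
proof (intro set_eqI iffI)
  fix w :: real
  {
    assume w: "w \<in> {\<omega>::real \<in> {0..1}. \<omega>^2 < U \<and> L < \<omega>^2 \<and> l2 < \<omega>^2}"
    then show "w \<in> {sqrt L<..1}" using lt_sq_iff[of w L] assms by auto
  }
  {
    assume w: "w \<in> {sqrt L<..1}"
    have w0: "0 \<le> w" using w real_sqrt_ge_zero[of L] assms(1) unfolding greaterThanAtMost_iff by linarith
    have "w^2 \<le> 1" using w w0 by (simp add: power_le_one)
    moreover have "L < w^2" using w w0 lt_sq_iff[of w L] assms by auto
    ultimately show "w \<in> {\<omega>::real \<in> {0..1}. \<omega>^2 < U \<and> L < \<omega>^2 \<and> l2 < \<omega>^2}"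
      using w w0 assms unfolding mem_Collect_eq atLeastAtMost_iff greaterThanAtMost_iff
      by (intro conjI; linarith)
  }
qed

lemma set5: assumes "0 \<le> L" "l2 \<le> L" "L < U" "U \<le> 1"
  shows "{\<omega>::real \<in> {0..1}. \<omega>^2 < U \<and> L < \<omega>^2 \<and> l2 < \<omega>^2} = {sqrt L<..<sqrt U}"
proof (intro set_eqI iffI)
  fix w :: real
  have sU: "sqrt U \<le> 1" using assms by simp
  {
    assume w: "w \<in> {\<omega>::real \<in> {0..1}. \<omega>^2 < U \<and> L < \<omega>^2 \<and> l2 < \<omega>^2}"
    then show "w \<in> {sqrt L<..<sqrt U}" using lt_sq_iff[of w L] sq_lt_iff[of w U] assms by auto
  }
  {
    assume w: "w \<in> {sqrt L<..<sqrt U}"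
    have w0: "0 \<le> w" using w real_sqrt_ge_zero[of L] assms(1) unfolding greaterThanLessThan_iff by linarith
    have "w^2 < U" using w w0 sq_lt_iff[of w U] assms by auto
    moreover have "L < w^2" using w w0 lt_sq_iff[of w L] assms by auto
    ultimately show "w \<in> {\<omega>::real \<in> {0..1}. \<omega>^2 < U \<and> L < \<omega>^2 \<and> l2 < \<omega>^2}"
      using w w0 sU assms unfolding mem_Collect_eq atLeastAtMost_iff greaterThanLessThan_iff
      by (intro conjI; linarith)
  }
qed

lemma case3: "Omega (1/2) (1/4) (8/19) 1 1 (2*(19/10)) (1/2) 1 = {0..<sqrt (1/4)}"
proof -
  have "Omega (1/2) (1/4) (8/19) 1 1 (2*(19/10)) (1/2) 1 =
        {\<omega> \<in> {0..1}. \<omega>^2 < 1/4 \<and> -2253/1280 < \<omega>^2 \<and> -137/32 < \<omega>^2}"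
    by (subst Omega_eq[OF Eval]) (simp_all add: power2_eq_square)
  also have "\<dots> = {0..<sqrt (1/4)}" by (rule set3) auto
  finally show ?thesis .
qed

lemma case4: "Omega (1/10) (5/4) (9/20) 1 1 (2*(8/5)) (1/2) 1 = {sqrt (113/144)<..1}"
proof -
  have "Omega (1/10) (5/4) (9/20) 1 1 (2*(8/5)) (1/2) 1 =
        {\<omega> \<in> {0..1}. \<omega>^2 < 2 \<and> 113/144 < \<omega>^2 \<and> -32/9 < \<omega>^2}"
    by (subst Omega_eq[OF Eval]) (simp_all add: power2_eq_square)
  also have "\<dots> = {sqrt (113/144)<..1}" by (rule set4) auto
  finally show ?thesis .
qed

lemma case5: "Omega (1/20) (11/10) (171/200) 1 1 (2*(8/5)) (1/2) 1 = {sqrt (1043/6840)<..<sqrt (325/342)}"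
proof -
  have "Omega (1/20) (11/10) (171/200) 1 1 (2*(8/5)) (1/2) 1 =
        {\<omega> \<in> {0..1}. \<omega>^2 < 325/342 \<and> 1043/6840 < \<omega>^2 \<and> -1295/684 < \<omega>^2}"
    by (subst Omega_eq[OF Eval]) (simp_all add: power2_eq_square)
  also have "\<dots> = {sqrt (1043/6840)<..<sqrt (325/342)}" by (rule set5) auto
  finally show ?thesis .
qed

theorem proposition6:
  shows "(\<forall>c \<gamma> h d \<sigma> \<mu> b \<beta>. admissible c \<gamma> h d \<sigma> \<mu> b \<beta> \<longrightarrow>
            is_interval (Omega c \<gamma> h d \<sigma> \<mu> b \<beta>))
   \<and> (\<exists>c \<gamma> h d \<sigma> \<mu> b \<beta>. admissible c \<gamma> h d \<sigma> \<mu> b \<beta> \<and>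
            Omega c \<gamma> h d \<sigma> \<mu> b \<beta> = {})
   \<and> (\<exists>c \<gamma> h d \<sigma> \<mu> b \<beta>. admissible c \<gamma> h d \<sigma> \<mu> b \<beta> \<and>
            Omega c \<gamma> h d \<sigma> \<mu> b \<beta> = {0..1})
   \<and> (\<exists>c \<gamma> h d \<sigma> \<mu> b \<beta> w. admissible c \<gamma> h d \<sigma> \<mu> b \<beta> \<and> 0 < w \<and> w < 1 \<and>
            Omega c \<gamma> h d \<sigma> \<mu> b \<beta> = {0..<w})
   \<and> (\<exists>c \<gamma> h d \<sigma> \<mu> b \<beta> w. admissible c \<gamma> h d \<sigma> \<mu> b \<beta> \<and> 0 < w \<and> w < 1 \<and>
            Omega c \<gamma> h d \<sigma> \<mu> b \<beta> = {w<..1})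
   \<and> (\<exists>c \<gamma> h d \<sigma> \<mu> b \<beta> wa wb. admissible c \<gamma> h d \<sigma> \<mu> b \<beta> \<and>
            0 < wa \<and> wa < wb \<and> wb < 1 \<and>
            Omega c \<gamma> h d \<sigma> \<mu> b \<beta> = {wa<..<wb})"
proof (intro conjI)
  show "\<forall>c \<gamma> h d \<sigma> \<mu> b \<beta>. admissible c \<gamma> h d \<sigma> \<mu> b \<beta> \<longrightarrow>
            is_interval (Omega c \<gamma> h d \<sigma> \<mu> b \<beta>)" using part1 by blast
  show "\<exists>c \<gamma> h d \<sigma> \<mu> b \<beta>. admissible c \<gamma> h d \<sigma> \<mu> b \<beta> \<and>
            Omega c \<gamma> h d \<sigma> \<mu> b \<beta> = {}"
    by (rule exI[of _ "1/2"], rule exI[of _ 1], rule exI[of _ "1/2"], rule exI[of _ "1/2"],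
        rule exI[of _ 1], rule exI[of _ "2*3"], rule exI[of _ "1/2"], rule exI[of _ 1])
       (simp only: case1, simp add: admissible_def)
  show "\<exists>c \<gamma> h d \<sigma> \<mu> b \<beta>. admissible c \<gamma> h d \<sigma> \<mu> b \<beta> \<and>
            Omega c \<gamma> h d \<sigma> \<mu> b \<beta> = {0..1}"
    by (rule exI[of _ "1/2"], rule exI[of _ "1/2"], rule exI[of _ "1/4"], rule exI[of _ 1],
        rule exI[of _ 1], rule exI[of _ "2*(1/2)"], rule exI[of _ "1/2"], rule exI[of _ 1])
       (simp only: case2, simp add: admissible_def)
  show "\<exists>c \<gamma> h d \<sigma> \<mu> b \<beta> w. admissible c \<gamma> h d \<sigma> \<mu> b \<beta> \<and> 0 < w \<and> w < 1 \<and>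
            Omega c \<gamma> h d \<sigma> \<mu> b \<beta> = {0..<w}"
    by (rule exI[of _ "1/2"], rule exI[of _ "1/4"], rule exI[of _ "8/19"], rule exI[of _ 1],
        rule exI[of _ 1], rule exI[of _ "2*(19/10)"], rule exI[of _ "1/2"], rule exI[of _ 1],
        rule exI[of _ "sqrt (1/4)"])
       (simp only: case3, simp add: admissible_def)
  show "\<exists>c \<gamma> h d \<sigma> \<mu> b \<beta> w. admissible c \<gamma> h d \<sigma> \<mu> b \<beta> \<and> 0 < w \<and> w < 1 \<and>
            Omega c \<gamma> h d \<sigma> \<mu> b \<beta> = {w<..1}"
    by (rule exI[of _ "1/10"], rule exI[of _ "5/4"], rule exI[of _ "9/20"], rule exI[of _ 1],
        rule exI[of _ 1], rule exI[of _ "2*(8/5)"], rule exI[of _ "1/2"], rule exI[of _ 1],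
        rule exI[of _ "sqrt (113/144)"])
       (simp only: case4, simp add: admissible_def)
  show "\<exists>c \<gamma> h d \<sigma> \<mu> b \<beta> wa wb. admissible c \<gamma> h d \<sigma> \<mu> b \<beta> \<and>
            0 < wa \<and> wa < wb \<and> wb < 1 \<and>
            Omega c \<gamma> h d \<sigma> \<mu> b \<beta> = {wa<..<wb}"
    by (rule exI[of _ "1/20"], rule exI[of _ "11/10"], rule exI[of _ "171/200"], rule exI[of _ 1],
        rule exI[of _ 1], rule exI[of _ "2*(8/5)"], rule exI[of _ "1/2"], rule exI[of _ 1],
        rule exI[of _ "sqrt (1043/6840)"], rule exI[of _ "sqrt (325/342)"])
       (simp only: case5, simp add: admissible_def)
qed

end
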